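(* For integers $q\ge1$ and $i\ge0$, let $q!\gamma_i$ denote the coefficient of $n^{2q-i}$ in the polynomial $q!\,u_{\mathsf R}(q;n)=(n)_q^2$, so that $$q!\gamma_i=\sum_{k=0}^i s(q,q-k)\,s(q,q-(i-k)).$$ Then, as a function of $q$, $q!\gamma_i$ is a polynomial in $q$ of degree $2i$; it has the factor $(q)_{\lceil i/2\rceil+1}$; and its coefficient of $q^{2i}$ is $$\frac{1}{(2i)!}\sum_{k=0}^i\binom{2i}{2k}\sum_{r=0}^k(-1)^r\binom{2k}{k+r}S(k+r,r)\sum_{s=0}^{i-k}(-1)^s\binom{2(i-k)}{i-k+s}S(i-k+s,s),$$ whose sign is $(-1)^i$.
   Context: $u_{\mathsf R}(q;n)=q!\binom nq^2=\frac1{q!}(n)_q^2$ is the number of placements of $q$ unlabelled nonattacking rooks on an $n\times n$ board, where $(n)_q=n(n-1)\cdots(n-q+1)$ is the falling factorial. $s(q,j)$ denotes the (signed) Stirling number of the first kind, taken to be $0$ if $j<0$ or $j>q$, and $S(n,k)$ the Stirling number of the second kind. *)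

theory Defs
  imports "HOL-Computational_Algebra.Polynomial" "HOL-Combinatorics.Stirling"
begin

definition ffact_poly :: "nat \<Rightarrow> 'a::comm_ring_1 poly" where
  "ffact_poly m = (\<Prod>j<m. [:- of_nat j, 1:])"

definition qfact_gamma :: "nat \<Rightarrow> nat \<Rightarrow> int" where
  "qfact_gamma q i = (if i \<le> 2 * q then coeff ((ffact_poly q :: int poly) ^ 2) (2 * q - i) else 0)"

definition lead_gamma :: "nat \<Rightarrow> rat" where
  "lead_gamma i = (1 / fact (2 * i)) *
     (\<Sum>k = 0..i. of_nat ((2 * i) choose (2 * k)) *
        (\<Sum>r = 0..k. (-1) ^ r * of_nat ((2 * k) choose (k + r)) * of_nat (Stirling (k + r) r)) *
        (\<Sum>s = 0..i - k. (-1) ^ s * of_nat ((2 * (i - k)) choose (i - k + s)) *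
                         of_nat (Stirling (i - k + s) s)))"

end

theory Submission imports Defs begin

definition shiftp :: "rat poly \<Rightarrow> rat poly" where
 "shiftp Q = (\<Sum>j\<le>degree Q. smult (coeff Q j) ([:1,1:]^j))"

lemma poly_upto: "degree p \<le> N \<Longrightarrow> poly p (x::rat) = (\<Sum>i\<le>N. coeff p i * x^i)"
  by (subst poly_altdef) (intro sum.mono_neutral_left, auto simp: coeff_eq_0)

lemma poly_shiftp: "poly (shiftp Q) x = poly Q (x+1)"
  by (simp add: shiftp_def poly_sum poly_altdef[of Q] add.commute)

lemma coeff_shiftp: "coeff (shiftp Q) k = (\<Sum>j\<le>degree Q. coeff Q j * of_nat (j choose k))"
  unfolding shiftp_def coeff_sum
proof (intro sum.cong refl)
  fix j assume "j \<in> {..degree Q}"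
  show "coeff (smult (coeff Q j) ([:1, 1:] ^ j)) k = coeff Q j * of_nat (j choose k)"
  proof (cases "k \<le> j")
    case True thus ?thesis by (simp add: coeff_linear_poly_power)
  next
    case False
    have "degree ([:1::rat, 1:] ^ j) \<le> j"
      by (rule order.trans[OF degree_power_le]) simp
    with False have "coeff ([:1::rat, 1:] ^ j) k = 0" by (intro coeff_eq_0) auto
    with False show ?thesis by simp
  qed
qed

lemma coeff_shiftp_le: "degree Q \<le> N \<Longrightarrow> coeff (shiftp Q) k = (\<Sum>j\<le>N. coeff Q j * of_nat (j choose k))"
  unfolding coeff_shiftp by (intro sum.mono_neutral_left) (auto simp: coeff_eq_0)

lemma shiftp_high: assumes "degree Q \<le> Suc n" "n < k" shows "coeff (shiftp Q) k = coeff Q k"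
proof -
  have "coeff (shiftp Q) k = (\<Sum>j\<le>k. coeff Q j * of_nat (j choose k))"
    using assms by (intro coeff_shiftp_le) auto
  also have "\<dots> = (\<Sum>j<k. coeff Q j * of_nat (j choose k)) + coeff Q k"
    by (simp add: lessThan_Suc_atMost[symmetric])
  also have "(\<Sum>j<k. coeff Q j * of_nat (j choose k)) = 0"
    by (intro sum.neutral) auto
  finally show ?thesis by simp
qed

lemma shiftp_n: assumes "degree Q \<le> Suc n"
  shows "coeff (shiftp Q) n = coeff Q n + of_nat (Suc n) * coeff Q (Suc n)"
proof -
  have "coeff (shiftp Q) n = (\<Sum>j\<le>Suc n. coeff Q j * of_nat (j choose n))"
    using assms by (intro coeff_shiftp_le) auto
  also have "\<dots> = (\<Sum>j<n. coeff Q j * of_nat (j choose n)) + coeff Q n + coeff Q (Suc n) * of_nat (Suc n)"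
    by (simp add: lessThan_Suc_atMost[symmetric])
  also have "(\<Sum>j<n. coeff Q j * of_nat (j choose n)) = 0"
    by (intro sum.neutral) auto
  finally show ?thesis by simp
qed

definition dif :: "rat poly \<Rightarrow> rat poly" where "dif Q = shiftp Q - Q"

lemma poly_dif: "poly (dif Q) x = poly Q (x+1) - poly Q x"
  by (simp add: dif_def poly_shiftp)

lemma dif_add: "dif (A + B) = dif A + dif B"
  by (rule poly_eq_poly_eq_iff[THEN iffD1]) (auto simp: poly_dif)

lemma dif_deg: assumes "degree Q \<le> Suc n" shows "degree (dif Q) \<le> n"
proof (rule degree_le, intro allI impI)
  fix k assume "n < k"
  thus "coeff (dif Q) k = 0" using shiftp_high[OF assms] by (simp add: dif_def)
qed

lemma dif_coeff: assumes "degree Q \<le> Suc n" shows "coeff (dif Q) n = of_nat (Suc n) * coeff Q (Suc n)"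
  using shiftp_n[OF assms] by (simp add: dif_def)

lemma antidiff: "degree (f::rat poly) \<le> n \<Longrightarrow> \<exists>F. dif F = f \<and> degree F \<le> Suc n \<and> coeff F (Suc n) = coeff f n / of_nat (Suc n)"
proof (induction n arbitrary: f)
  case 0
  define F where "F = monom (coeff f 0) 1"
  have dF: "degree F \<le> 1" unfolding F_def by (rule degree_monom_le)
  have "dif F = f"
  proof (rule poly_eqI)
    fix k show "coeff (dif F) k = coeff f k"
    proof (cases k)
      case 0 thus ?thesis using dif_coeff[of F 0] dF by (simp add: F_def)
    next
      case (Suc m)
      have "coeff (dif F) k = 0" using dif_deg[of F 0] dF Suc by (intro coeff_eq_0) auto
      moreover have "coeff f k = 0" using 0 Suc by (intro coeff_eq_0) auto
      ultimately show ?thesis by simp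
    qed
  qed
  thus ?case using dF by (intro exI[of _ F]) (auto simp: F_def)
next
  case (Suc n)
  define G where "G = monom (coeff f (Suc n) / of_nat (Suc (Suc n))) (Suc (Suc n))"
  have dG: "degree G \<le> Suc (Suc n)" unfolding G_def by (rule degree_monom_le)
  define g where "g = f - dif G"
  have dg1: "degree g \<le> Suc n" unfolding g_def using Suc.prems dif_deg[OF dG]
    by (meson degree_diff_le)
  have "coeff g (Suc n) = 0"
    unfolding g_def using dif_coeff[OF dG] by (simp add: G_def del: of_nat_Suc)
  hence dg: "degree g \<le> n" using dg1
    by (metis le_SucE leading_coeff_0_iff le0 degree_0)
  obtain F' where F': "dif F' = g" "degree F' \<le> Suc n" "coeff F' (Suc n) = coeff g n / of_nat (Suc n)"
    using Suc.IH[OF dg] by blast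
  define F where "F = G + F'"
  have "dif F = f" unfolding F_def dif_add F'(1) g_def by simp
  moreover have "degree F \<le> Suc (Suc n)" unfolding F_def using dG F'(2)
    by (meson degree_add_le le_Suc_eq)
  moreover have "coeff F' (Suc (Suc n)) = 0" using F'(2) by (intro coeff_eq_0) auto
  hence "coeff F (Suc (Suc n)) = coeff f (Suc n) / of_nat (Suc (Suc n))"
    by (simp add: F_def G_def del: of_nat_Suc)
  ultimately show ?case by blast
qed

lemma psum: assumes "degree (f::rat poly) \<le> n"
  shows "\<exists>F. (\<forall>q::nat. poly F (of_nat q) = (\<Sum>t<q. poly f (of_nat t))) \<and> degree F \<le> Suc n \<and>
             coeff F (Suc n) = coeff f n / of_nat (Suc n)"
proof -
  obtain F where F: "dif F = f" "degree F \<le> Suc n" "coeff F (Suc n) = coeff f n / of_nat (Suc n)"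
    using antidiff[OF assms] by blast
  define F0 where "F0 = F - [:poly F 0:]"
  have "poly F0 (of_nat q) = (\<Sum>t<q. poly f (of_nat t))" for q
  proof -
    have "(\<Sum>t<q. poly f (of_nat t)) = (\<Sum>t<q. poly F (of_nat (Suc t)) - poly F (of_nat t))"
      by (intro sum.cong refl) (simp add: F(1)[symmetric] poly_dif add.commute)
    also have "\<dots> = poly F (of_nat q) - poly F (of_nat 0)"
      by (rule sum_lessThan_telescope)
    finally show ?thesis by (simp add: F0_def)
  qed
  moreover have "degree F0 \<le> Suc n" unfolding F0_def using F(2)
    by (intro degree_diff_le) auto
  moreover have "coeff F0 (Suc n) = coeff f n / of_nat (Suc n)" using F(3) by (simp add: F0_def)
  ultimately show ?thesis by blast
qed

definition D :: "nat \<Rightarrow> (nat \<Rightarrow> rat) \<Rightarrow> rat" where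
  "D n g = (\<Sum>m\<le>n. (-1)^m * of_nat (n choose m) * g m)"

lemma D_Suc: "D (Suc n) g = D n g - D n (\<lambda>m. g (Suc m))"
proof -
  have "D (Suc n) g = g 0 + (\<Sum>m\<le>n. (-1)^Suc m * of_nat (Suc n choose Suc m) * g (Suc m))"
    unfolding D_def by (subst sum.atMost_Suc_shift) simp
  also have "\<dots> = g 0 + (\<Sum>m\<le>n. (-1)^Suc m * of_nat (n choose Suc m) * g (Suc m))
      - D n (\<lambda>m. g (Suc m))"
    unfolding D_def by (simp add: sum.distrib sum_subtractf algebra_simps sum_negf)
  also have "g 0 + (\<Sum>m\<le>n. (-1)^Suc m * of_nat (n choose Suc m) * g (Suc m)) = D n g"
  proof -
    have "D n g = (\<Sum>m\<le>Suc n. (-1)^m * of_nat (n choose m) * g m)"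
      unfolding D_def by simp
    also have "\<dots> = g 0 + (\<Sum>m\<le>n. (-1)^Suc m * of_nat (n choose Suc m) * g (Suc m))"
      by (subst sum.atMost_Suc_shift) simp
    finally show ?thesis by simp
  qed
  finally show ?thesis .
qed

lemma D_poly: "degree Q \<le> n \<Longrightarrow> D n (\<lambda>m. poly Q (of_nat m)) = (-1)^n * fact n * coeff Q n"
proof (induction n arbitrary: Q)
  case 0
  then obtain c where "Q = [:c:]" by (metis degree_0_id le_0_eq)
  thus ?case by (simp add: D_def)
next
  case (Suc n)
  have "D (Suc n) (\<lambda>m. poly Q (of_nat m)) = - D n (\<lambda>m. poly (dif Q) (of_nat m))"
    unfolding D_Suc by (simp add: D_def poly_dif sum_subtractf[symmetric] algebra_simps sum_negf[symmetric])
  also have "\<dots> = - ((-1)^n * fact n * (of_nat (Suc n) * coeff Q (Suc n)))"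
    using Suc.IH[OF dif_deg[OF Suc.prems]] dif_coeff[OF Suc.prems] by simp
  finally show ?case by (simp add: algebra_simps)
qed


definition cc :: "nat \<Rightarrow> nat \<Rightarrow> int" where
  "cc k q = coeff (reflect_poly (ffact_poly q :: int poly)) k"

lemma ffact_Suc: "ffact_poly (Suc q) = ffact_poly q * [:- of_nat q, 1:]"
  by (simp add: ffact_poly_def)

lemma ffact_deg: "ffact_poly q \<noteq> (0::int poly) \<and> degree (ffact_poly q :: int poly) = q"
proof (induction q)
  case 0 thus ?case by (simp add: ffact_poly_def)
next
  case (Suc q)
  have l: "[:- of_nat q, 1::int:] \<noteq> 0" "degree [:- of_nat q, 1::int:] = 1" by simp_all
  have "ffact_poly q * [:- of_nat q, 1::int:] \<noteq> 0" using Suc l by (metis mult_eq_0_iff)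
  moreover have "degree (ffact_poly q * [:- of_nat q, 1::int:]) = Suc q"
    using Suc l by (subst degree_mult_eq) auto
  ultimately show ?case unfolding ffact_Suc by blast
qed

lemma refl_lin: "reflect_poly [:- of_nat q, 1::int:] = [:1, - of_nat q:]"
  by (cases q) (simp_all add: reflect_poly_def)

lemma cc_Suc: "cc k (Suc q) = cc k q - of_nat q * (if k = 0 then 0 else cc (k-1) q)"
proof -
  have "reflect_poly (ffact_poly (Suc q) :: int poly) = reflect_poly (ffact_poly q) * [:1, - of_nat q:]"
    by (simp only: ffact_Suc reflect_poly_mult refl_lin)
  also have "\<dots> = reflect_poly (ffact_poly q) + pCons 0 (smult (- of_nat q) (reflect_poly (ffact_poly q)))"
    by (simp add: mult_pCons_right)
  finally show ?thesis unfolding cc_def by (cases k) simp_all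
qed

lemma cc_0: "cc k 0 = (if k = 0 then 1 else 0)"
  by (simp add: cc_def ffact_poly_def)

lemma cc_k0: "cc 0 q = 1"
  by (induction q) (simp_all add: cc_Suc cc_0)

lemma cc_vanish: "q < k \<Longrightarrow> cc k q = 0"
proof (induction q arbitrary: k)
  case 0 thus ?case by (simp add: cc_0)
next
  case (Suc q) thus ?case by (simp add: cc_Suc)
qed

lemma cc_diag: "cc (Suc q) (Suc q) = 0"
proof (induction q)
  case 0 thus ?case by (simp add: cc_Suc cc_0)
next
  case (Suc q) thus ?case by (subst cc_Suc) (simp add: cc_vanish)
qed

lemma cc_sum: "cc (Suc k) q = - (\<Sum>t<q. of_nat t * cc k t)"
  by (induction q) (simp_all add: cc_Suc cc_0)

lemma gamma_eq: "qfact_gamma q i = (\<Sum>k\<le>i. cc k q * cc (i-k) q)"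
proof -
  let ?F = "ffact_poly q :: int poly"
  have R: "reflect_poly (?F^2) = reflect_poly ?F * reflect_poly ?F"
    by (simp add: power2_eq_square reflect_poly_mult)
  have sumeq: "(\<Sum>k\<le>i. cc k q * cc (i-k) q) = coeff (reflect_poly (?F^2)) i"
    unfolding R coeff_mult cc_def ..
  have dF2: "degree (?F^2) = 2*q" using ffact_deg[of q] by (simp add: degree_power_eq)
  show ?thesis
  proof (cases "i \<le> 2*q")
    case True
    thus ?thesis unfolding sumeq qfact_gamma_def coeff_reflect_poly dF2 by simp
  next
    case False
    have "(\<Sum>k\<le>i. cc k q * cc (i-k) q) = 0"
    proof (intro sum.neutral ballI)
      fix k assume "k \<in> {..i}"
      show "cc k q * cc (i-k) q = 0"
      proof (cases "q < k")
        case True thus ?thesis by (simp add: cc_vanish)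
      next
        case False
        hence "q < i - k" using \<open>\<not> i \<le> 2*q\<close> by linarith
        thus ?thesis by (simp add: cc_vanish)
      qed
    qed
    thus ?thesis using False by (simp add: qfact_gamma_def)
  qed
qed

lemma Pk: "\<exists>P::rat poly. (\<forall>q. poly P (of_nat q) = of_int (cc k q)) \<and> degree P = 2*k \<and>
            coeff P (2*k) = (-1)^k / (2^k * fact k)"
proof (induction k)
  case 0 thus ?case by (intro exI[of _ 1]) (simp add: cc_k0)
next
  case (Suc k)
  then obtain P :: "rat poly" where P: "\<forall>q. poly P (of_nat q) = of_int (cc k q)" "degree P = 2*k"
      "coeff P (2*k) = (-1)^k / (2^k * fact k)" by blast
  have Pnz: "P \<noteq> 0" using P(3) by auto
  define f where "f = pCons 0 P"
  have df: "degree f \<le> 2*k+1" using P(2) Pnz by (simp add: f_def)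
  obtain F where F: "\<forall>q::nat. poly F (of_nat q) = (\<Sum>t<q. poly f (of_nat t))" "degree F \<le> Suc (2*k+1)"
     "coeff F (Suc (2*k+1)) = coeff f (2*k+1) / of_nat (Suc (2*k+1))"
    using psum[OF df] by blast
  have "coeff (-F) (2 * Suc k) = - ((-1)^k / (2^k * fact k)) / of_nat (2*k+2)"
    using F(3) P(3) by (simp add: f_def)
  also have "\<dots> = (-1)^Suc k / (2^Suc k * fact (Suc k))"
    by (simp add: field_simps fact_Suc)
  finally have c: "coeff (-F) (2 * Suc k) = (-1)^Suc k / (2^Suc k * fact (Suc k))" .
  hence "coeff (-F) (2 * Suc k) \<noteq> 0" by simp
  hence "2 * Suc k \<le> degree (-F)" by (rule le_degree)
  moreover have "degree (-F) \<le> 2 * Suc k" using F(2) by simp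
  ultimately have "degree (-F) = 2 * Suc k" by simp
  moreover have "\<forall>q. poly (-F) (of_nat q) = of_int (cc (Suc k) q)"
    using F(1) P(1) by (simp add: cc_sum f_def)
  ultimately show ?case using c by blast
qed

definition T :: "nat \<Rightarrow> nat \<Rightarrow> rat" where
  "T k m = (if k \<le> m then of_nat (Stirling m (m-k)) else 0)"

lemma T_0: "T 0 m = 1" by (simp add: T_def)
lemma T_Suc0: "T (Suc k) 0 = 0" by (simp add: T_def)

lemma T_Suc: "T (Suc k) (Suc m) = T (Suc k) m + (of_nat m - of_nat k) * T k m"
proof -
  consider "Suc k \<le> m" | "k = m" | "Suc k > Suc m" by linarith
  thus ?thesis
  proof cases
    case 1
    then obtain d where d: "m - k = Suc d" "m - Suc k = d" by (metis Suc_diff_le diff_Suc_Suc le_SucI Suc_le_D diff_Suc_1)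
    have "Stirling (Suc m) (Suc d) = Suc d * Stirling m (Suc d) + Stirling m d" by simp
    moreover have e: "(of_nat m - of_nat k :: rat) = 1 + of_nat d" using d 1 by (simp add: of_nat_diff[symmetric])
    ultimately show ?thesis using 1 d by (simp add: T_def e algebra_simps)
  next
    case 2 thus ?thesis by (simp add: T_def)
  next
    case 3 thus ?thesis by (simp add: T_def)
  qed
qed

lemma T_sum: "T (Suc k) m = (\<Sum>t<m. (of_nat t - of_nat k) * T k t)"
  by (induction m) (simp_all add: T_Suc T_Suc0)

lemma Qk: "\<exists>Q::rat poly. (\<forall>m. poly Q (of_nat m) = T k m) \<and> degree Q \<le> 2*k \<and>
            coeff Q (2*k) = 1 / (2^k * fact k)"
proof (induction k)
  case 0 thus ?case by (intro exI[of _ 1]) (simp add: T_0)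
next
  case (Suc k)
  then obtain Q :: "rat poly" where Q: "\<forall>m. poly Q (of_nat m) = T k m" "degree Q \<le> 2*k"
      "coeff Q (2*k) = 1 / (2^k * fact k)" by blast
  define f where "f = pCons 0 Q - smult (of_nat k) Q"
  have d1: "degree (pCons 0 Q) \<le> 2*k+1" using Q(2) degree_pCons_le[of 0 Q] by linarith
  have d2: "degree (smult (of_nat k) Q) \<le> 2*k+1" using Q(2) degree_smult_le[of "of_nat k" Q] by linarith
  have df: "degree f \<le> 2*k+1" unfolding f_def using d1 d2 by (rule degree_diff_le)
  have "coeff Q (2*k+1) = 0" using Q(2) by (intro coeff_eq_0) auto
  hence cf: "coeff f (2*k+1) = coeff Q (2*k)" by (simp add: f_def)
  obtain F where F: "\<forall>q::nat. poly F (of_nat q) = (\<Sum>t<q. poly f (of_nat t))" "degree F \<le> Suc (2*k+1)"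
     "coeff F (Suc (2*k+1)) = coeff f (2*k+1) / of_nat (Suc (2*k+1))"
    using psum[OF df] by blast
  have "coeff F (2 * Suc k) = (1 / (2^k * fact k)) / of_nat (2*k+2)"
    using F(3) Q(3) cf by simp
  also have "\<dots> = 1 / (2^Suc k * fact (Suc k))"
    by (simp add: field_simps fact_Suc)
  finally have "coeff F (2 * Suc k) = 1 / (2^Suc k * fact (Suc k))" .
  moreover have "degree F \<le> 2 * Suc k" using F(2) by simp
  moreover have "\<forall>m. poly F (of_nat m) = T (Suc k) m"
    using F(1) Q(1) by (simp add: T_sum f_def algebra_simps)
  ultimately show ?case by blast
qed

lemma Aid: "(\<Sum>r=0..k. (-1)^r * of_nat ((2*k) choose (k+r)) * of_nat (Stirling (k+r) r) :: rat)
            = (-1)^k * fact (2*k) / (2^k * fact k)"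
proof -
  obtain Q :: "rat poly" where Q: "\<forall>m. poly Q (of_nat m) = T k m" "degree Q \<le> 2*k"
      "coeff Q (2*k) = 1 / (2^k * fact k)" using Qk by blast
  have "D (2*k) (T k) = fact (2*k) / (2^k * fact k)"
    using D_poly[OF Q(2)] Q by (simp add: power_mult)
  also have "D (2*k) (T k) = (\<Sum>m\<in>{k..2*k}. (-1)^m * of_nat ((2*k) choose m) * T k m)"
    unfolding D_def by (intro sum.mono_neutral_right) (auto simp: T_def)
  also have "\<dots> = (\<Sum>r=0..k. (-1)^(r+k) * of_nat ((2*k) choose (r+k)) * T k (r+k))"
    using sum.shift_bounds_cl_nat_ivl[of "\<lambda>m. (-1)^m * of_nat ((2*k) choose m) * T k m" 0 k k]
    by (simp add: mult_2)
  also have "\<dots> = (-1)^k * (\<Sum>r=0..k. (-1)^r * of_nat ((2*k) choose (k+r)) * of_nat (Stirling (k+r) r))"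
    by (simp add: sum_distrib_left T_def power_add add.commute mult_ac)
  finally have h: "(-1)^k * (\<Sum>r=0..k. (-1)^r * of_nat ((2*k) choose (k+r)) * of_nat (Stirling (k+r) r) :: rat)
       = fact (2*k) / (2^k * fact k)" by simp
  have e: "(-1::rat)^k * (-1)^k = 1" by (simp add: power_mult_distrib[symmetric])
  show ?thesis using arg_cong[OF h, of "\<lambda>x. (-1)^k * x"] e by (simp add: mult.assoc[symmetric])
qed


lemma key_sum: "(\<Sum>k=0..i. ((-1)^k / (2^k * fact k)) * ((-1)^(i-k) / (2^(i-k) * fact (i-k))) :: rat)
   = (-1)^i / fact i"
proof -
  have "(\<Sum>k=0..i. ((-1)^k / (2^k * fact k)) * ((-1)^(i-k) / (2^(i-k) * fact (i-k))) :: rat)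
      = (\<Sum>k=0..i. (-1)^i / (2^i * fact i) * of_nat (i choose k))"
  proof (intro sum.cong refl)
    fix k assume "k \<in> {0..i}"
    hence k: "k \<le> i" by simp
    have e1: "(-1::rat)^k * (-1)^(i-k) = (-1)^i" using k by (simp flip: power_add)
    have e2: "(2::rat)^k * 2^(i-k) = 2^i" using k by (simp flip: power_add)
    show "((-1)^k / (2^k * fact k)) * ((-1)^(i-k) / (2^(i-k) * fact (i-k))) =
          (-1)^i / (2^i * fact i) * (of_nat (i choose k) :: rat)"
      using e1 e2 k by (simp add: binomial_fact field_simps)
  qed
  also have "\<dots> = (-1)^i / (2^i * fact i) * of_nat (\<Sum>k\<le>i. i choose k)"
    by (simp add: sum_distrib_left atLeast0AtMost)
  also have "\<dots> = (-1)^i / fact i" by (simp add: choose_row_sum)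
  finally show ?thesis .
qed

lemma lead_val: "lead_gamma i = (-1)^i / fact i"
proof -
  have "lead_gamma i = (\<Sum>k=0..i. 1 / fact (2*i) * (of_nat ((2*i) choose (2*k)) *
          ((-1)^k * fact (2*k) / (2^k * fact k)) * ((-1)^(i-k) * fact (2*(i-k)) / (2^(i-k) * fact (i-k)))))"
    unfolding lead_gamma_def Aid sum_distrib_left ..
  also have "\<dots> = (\<Sum>k=0..i. ((-1)^k / (2^k * fact k)) * ((-1)^(i-k) / (2^(i-k) * fact (i-k))))"
  proof (intro sum.cong refl)
    fix k assume "k \<in> {0..i}"
    hence k: "k \<le> i" by simp
    have b: "(of_nat ((2*i) choose (2*k)) :: rat) = fact (2*i) / (fact (2*k) * fact (2*(i-k)))"
      using k by (simp add: binomial_fact diff_mult_distrib2)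
    show "1 / fact (2*i) * (of_nat ((2*i) choose (2*k)) *
          ((-1)^k * fact (2*k) / (2^k * fact k)) * ((-1)^(i-k) * fact (2*(i-k)) / (2^(i-k) * fact (i-k))))
         = ((-1)^k / (2^k * fact k)) * ((-1)^(i-k) / (2^(i-k) * fact (i-k)) :: rat)"
      unfolding b by (simp add: field_simps)
  qed
  also have "\<dots> = (-1)^i / fact i" by (rule key_sum)
  finally show ?thesis .
qed

lemma roots_dvd: "(\<forall>j<m. poly p (of_nat j) = (0::rat)) \<Longrightarrow> ffact_poly m dvd p"
proof (induction m)
  case 0 thus ?case by (simp add: ffact_poly_def)
next
  case (Suc m)
  then obtain r where r: "p = ffact_poly m * r" by (auto elim: dvdE)
  have "poly (ffact_poly m) (of_nat m :: rat) = (\<Prod>j<m. of_nat m - of_nat j)"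
    by (simp add: ffact_poly_def poly_prod)
  also have "\<dots> \<noteq> 0" by simp
  finally have nz: "poly (ffact_poly m) (of_nat m :: rat) \<noteq> 0" .
  have "poly p (of_nat m) = 0" using Suc.prems by simp
  hence "poly r (of_nat m) = 0" using nz r by simp
  hence "[:- of_nat m, 1:] dvd r" by (simp add: poly_eq_0_iff_dvd)
  then obtain r' where "r = [:- of_nat m, 1:] * r'" by (auto elim: dvdE)
  hence "p = ffact_poly m * ([:- of_nat m, 1:] * r')" using r by simp
  hence "p = ffact_poly (Suc m) * r'" by (simp only: ffact_Suc mult.assoc)
  thus ?case by simp
qed

lemma ceil_half: "2 * nat \<lceil>real i / 2\<rceil> \<le> i + 1"
proof -
  have a: "i \<le> 2 * ((i+1) div 2)" by presburger
  hence "real i \<le> 2 * real ((i+1) div 2)" by (metis of_nat_le_iff of_nat_mult of_nat_numeral)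
  hence "real i / 2 \<le> of_int (int ((i+1) div 2))" by simp
  hence "\<lceil>real i / 2\<rceil> \<le> int ((i+1) div 2)" by (simp add: ceiling_le_iff)
  hence "nat \<lceil>real i / 2\<rceil> \<le> (i+1) div 2" by simp
  moreover have "\<And>c. c \<le> (i+1) div 2 \<Longrightarrow> 2*c \<le> i+1" by presburger
  ultimately show ?thesis by blast
qed

lemma root_terms: assumes "2 * j \<le> i + 1" "1 \<le> i" "k \<le> i"
  shows "cc k j * cc (i-k) j = 0"
proof (cases "j < k \<or> j < i - k")
  case True thus ?thesis by (auto simp: cc_vanish)
next
  case False
  hence j1: "1 \<le> j" using assms by linarith
  then obtain j' where j': "j = Suc j'" by (cases j) auto
  have "k = j \<or> i - k = j" using False assms by linarith
  thus ?thesis using cc_diag[of j'] j' by auto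
qed

theorem proposition6p1:
  fixes i :: nat
  assumes "i \<ge> 1"
  shows "\<exists>p :: rat poly.
           (\<forall>q::nat. q \<ge> 1 \<longrightarrow> poly p (of_nat q) = of_int (qfact_gamma q i)) \<and>
           degree p = 2 * i \<and>
           ffact_poly (nat \<lceil>real i / 2\<rceil> + 1) dvd p \<and>
           coeff p (2 * i) = lead_gamma i \<and>
           sgn (lead_gamma i) = (-1) ^ i"
proof -
  have "\<forall>k. \<exists>P::rat poly. (\<forall>q. poly P (of_nat q) = of_int (cc k q)) \<and> degree P = 2*k \<and>
            coeff P (2*k) = (-1)^k / (2^k * fact k)" using Pk by blast
  from choice[OF this] obtain P :: "nat \<Rightarrow> rat poly" where
    P: "\<And>k q. poly (P k) (of_nat q) = of_int (cc k q)" "\<And>k. degree (P k) = 2*k"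
       "\<And>k. coeff (P k) (2*k) = (-1)^k / (2^k * fact k)" by blast
  define p where "p = (\<Sum>k=0..i. P k * P (i-k))"
  have pv: "poly p (of_nat q) = of_int (\<Sum>k\<le>i. cc k q * cc (i-k) q)" for q
    by (simp add: p_def poly_sum P(1) atLeast0AtMost)
  have cp: "coeff p (2*i) = (-1)^i / fact i"
  proof -
    have "coeff p (2*i) = (\<Sum>k=0..i. ((-1)^k / (2^k * fact k)) * ((-1)^(i-k) / (2^(i-k) * fact (i-k))))"
      unfolding p_def coeff_sum
    proof (intro sum.cong refl)
      fix k assume "k \<in> {0..i}"
      hence "2*i = degree (P k) + degree (P (i-k))" by (simp add: P(2))
      thus "coeff (P k * P (i - k)) (2 * i) =
          ((-1)^k / (2^k * fact k)) * ((-1)^(i-k) / (2^(i-k) * fact (i-k)))"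
        by (simp only: coeff_mult_degree_sum) (simp add: P(2,3))
    qed
    thus ?thesis using key_sum by simp
  qed
  have dle: "degree p \<le> 2*i" unfolding p_def
  proof (intro degree_sum_le)
    fix k assume "k \<in> {0..i}"
    thus "degree (P k * P (i-k)) \<le> 2*i"
      using degree_mult_le[of "P k" "P (i-k)"] by (simp add: P(2))
  qed simp
  have "coeff p (2*i) \<noteq> 0" using cp by simp
  hence dp: "degree p = 2*i" using dle le_degree by (metis le_antisym)
  have dv: "ffact_poly (nat \<lceil>real i / 2\<rceil> + 1) dvd p"
  proof (rule roots_dvd, intro allI impI)
    fix j assume "j < nat \<lceil>real i / 2\<rceil> + 1"
    hence j: "2 * j \<le> i + 1" using ceil_half[of i] by linarith
    have "(\<Sum>k\<le>i. cc k j * cc (i-k) j) = 0"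
      by (intro sum.neutral ballI) (use root_terms[OF j assms] in auto)
    thus "poly p (of_nat j) = 0" by (simp add: pv)
  qed
  have sg: "sgn (lead_gamma i) = (-1)^i"
    by (cases "even i") (auto simp: lead_val sgn_divide)
  show ?thesis
    by (intro exI[of _ p] conjI allI impI dv)
       (simp_all add: pv gamma_eq dp cp lead_val sg)
qed

end
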